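(* Let $L_1,L_2,L_3$ be lines of the spine space $\mathfrak M$ which are pairwise coplanar, whose closures $\overline{L_1},\overline{L_2},\overline{L_3}$ have a common point (proper or improper; i.e. the lines are concurrent or parallel), and which are not all contained in one plane of $\mathfrak M$. Then $L_1,L_2,L_3$ are all contained in one star or in one top of $\mathfrak M$.
   Context: Setup. Let $V$ be a vector space of finite dimension $n\ge 3$ over a division ring; $\mathrm{Sub}_j(V)$ is the set of $j$-dimensional subspaces of $V$. Fix $k$ with $1<k<n-1$, a subspace $W$ of $V$ with $w:=\dim W$, and an integer $m$ with $k-(n-w)\le m\le\min\{k,w\}$. For $H\in\mathrm{Sub}_{k-1}(V)$, $B\in\mathrm{Sub}_{k+1}(V)$, $H\subset B$, the $k$-pencil is $\mathbf p(H,B)=\{U\in\mathrm{Sub}_k(V):H\subset U\subset B\}$; the Grassmann space $\mathbf P_k(V)$ has points $\mathrm{Sub}_k(V)$ and lines the $k$-pencils. The spine space $\mathfrak M$ has point set $S=\{U\in\mathrm{Sub}_k(V):\dim(U\cap W)=m\}$ and line set $\mathcal L=\{\ell\cap S:\ell\text{ a $k$-pencil},\ |\ell\cap S|\ge2\}$; points of $\mathrm{Sub}_k(V)\setminus S$ are improper. Each $L\in\mathcal L$ lies in a unique $k$-pencil $\overline L$ (its closure); $L$ is projective if $L=\overline L$, affine if $|\overline L\setminus L|=1$. Affine lines are parallel if their closures meet in an improper point. A plane of $\mathbf P_k(V)$ is a set $\{U\in\mathrm{Sub}_k(V):Y\subset U\subset Z\}$ with $(\dim Y,\dim Z)=(k-2,k+1)$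 or $(k-1,k+2)$; a plane of $\mathfrak M$ is a set $E=P\cap S$ with $P$ a plane of $\mathbf P_k(V)$, containing two distinct lines of $\mathfrak M$; write $\overline E=P$. Lines $L_1,L_2$ are coplanar ($L_1\,\boldsymbol\pi\,L_2$) if some plane of $\mathfrak M$ contains both. The maximal strong subspaces (maximal sets of pairwise collinear points) of $\mathfrak M$ are: $\omega$-stars $\{U\in\mathrm{Sub}_k(V):H\subset U\subset H+W\}$ ($H\in\mathrm{Sub}_{k-1}(V)$, $\dim(H\cap W)=m-1$); $\alpha$-stars $\{U\in S:H\subset U\}$ ($H\in\mathrm{Sub}_{k-1}(V)$, $\dim(H\cap W)=m$); $\alpha$-tops $\{U\in\mathrm{Sub}_k(V):B\cap W\subset U\subset B\}$ ($B\in\mathrm{Sub}_{k+1}(V)$, $\dim(B\cap W)=m$); $\omega$-tops $\{U\in S:U\subset B\}$ ($B\in\mathrm{Sub}_{k+1}(V)$, $\dim(B\cap W)=m+1$). Stars are $\omega$- and $\alpha$-stars; tops are $\alpha$- and $\omega$-tops. *)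

theory Defs
  imports Main
begin

text \<open>A left vector space over a division ring: the vectors are the elements of the
type 'v (so V is UNIV), scalars of class division_ring, scalar multiplication s.\<close>

definition lvs :: "('k::division_ring \<Rightarrow> 'v::ab_group_add \<Rightarrow> 'v) \<Rightarrow> bool" where
  "lvs s \<longleftrightarrow> (\<forall>a x y. s a (x + y) = s a x + s a y) \<and> (\<forall>a b x. s (a + b) x = s a x + s b x)
      \<and> (\<forall>a b x. s a (s b x) = s (a * b) x) \<and> (\<forall>x. s 1 x = x)"

definition subsp :: "('k::division_ring \<Rightarrow> 'v::ab_group_add \<Rightarrow> 'v) \<Rightarrow> 'v set \<Rightarrow> bool" where
  "subsp s U \<longleftrightarrow> 0 \<in> U \<and> (\<forall>x\<in>U. \<forall>y\<in>U. x + y \<in> U) \<and> (\<forall>a. \<forall>x\<in>U. s a x \<in> U)"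

definition lspan :: "('k::division_ring \<Rightarrow> 'v::ab_group_add \<Rightarrow> 'v) \<Rightarrow> 'v set \<Rightarrow> 'v set" where
  "lspan s A = \<Inter>{U. subsp s U \<and> A \<subseteq> U}"

definition lin_indep :: "('k::division_ring \<Rightarrow> 'v::ab_group_add \<Rightarrow> 'v) \<Rightarrow> 'v set \<Rightarrow> bool" where
  "lin_indep s A \<longleftrightarrow> (\<forall>a\<in>A. a \<notin> lspan s (A - {a}))"

definition has_dim :: "('k::division_ring \<Rightarrow> 'v::ab_group_add \<Rightarrow> 'v) \<Rightarrow> 'v set \<Rightarrow> nat \<Rightarrow> bool" where
  "has_dim s U d \<longleftrightarrow> subsp s U \<and>
     (\<exists>B. finite B \<and> card B = d \<and> lin_indep s B \<and> B \<subseteq> U \<and> lspan s B = U)"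

definition Sub :: "('k::division_ring \<Rightarrow> 'v::ab_group_add \<Rightarrow> 'v) \<Rightarrow> nat \<Rightarrow> 'v set set" where
  "Sub s d = {U. has_dim s U d}"

definition subsum :: "'v::ab_group_add set \<Rightarrow> 'v set \<Rightarrow> 'v set" where
  "subsum A B = {x + y | x y. x \<in> A \<and> y \<in> B}"

definition pencil :: "('k::division_ring \<Rightarrow> 'v::ab_group_add \<Rightarrow> 'v) \<Rightarrow> nat \<Rightarrow> 'v set \<Rightarrow> 'v set \<Rightarrow> 'v set set" where
  "pencil s k H B = {U \<in> Sub s k. H \<subseteq> U \<and> U \<subseteq> B}"

definition is_pencil :: "('k::division_ring \<Rightarrow> 'v::ab_group_add \<Rightarrow> 'v) \<Rightarrow> nat \<Rightarrow> 'v set set \<Rightarrow> bool" where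
  "is_pencil s k l \<longleftrightarrow> (\<exists>H B. H \<in> Sub s (k - 1) \<and> B \<in> Sub s (k + 1) \<and> H \<subseteq> B \<and> l = pencil s k H B)"

definition spine_points :: "('k::division_ring \<Rightarrow> 'v::ab_group_add \<Rightarrow> 'v) \<Rightarrow> nat \<Rightarrow> 'v set \<Rightarrow> nat \<Rightarrow> 'v set set" where
  "spine_points s k W m = {U \<in> Sub s k. has_dim s (U \<inter> W) m}"

definition spine_line :: "('k::division_ring \<Rightarrow> 'v::ab_group_add \<Rightarrow> 'v) \<Rightarrow> nat \<Rightarrow> 'v set \<Rightarrow> nat \<Rightarrow> 'v set set \<Rightarrow> bool" where
  "spine_line s k W m L \<longleftrightarrow> (\<exists>l. is_pencil s k l \<and> L = l \<inter> spine_points s k W m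
      \<and> (\<exists>x y. x \<noteq> y \<and> x \<in> L \<and> y \<in> L))"

definition line_closure :: "('k::division_ring \<Rightarrow> 'v::ab_group_add \<Rightarrow> 'v) \<Rightarrow> nat \<Rightarrow> 'v set set \<Rightarrow> 'v set set" where
  "line_closure s k L = (THE l. is_pencil s k l \<and> L \<subseteq> l)"

definition is_PG_plane :: "('k::division_ring \<Rightarrow> 'v::ab_group_add \<Rightarrow> 'v) \<Rightarrow> nat \<Rightarrow> 'v set set \<Rightarrow> bool" where
  "is_PG_plane s k P \<longleftrightarrow> (\<exists>Y Z. ((Y \<in> Sub s (k - 2) \<and> Z \<in> Sub s (k + 1)) \<or> (Y \<in> Sub s (k - 1) \<and> Z \<in> Sub s (k + 2)))
      \<and> P = {U \<in> Sub s k. Y \<subseteq> U \<and> U \<subseteq> Z})"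

definition spine_plane :: "('k::division_ring \<Rightarrow> 'v::ab_group_add \<Rightarrow> 'v) \<Rightarrow> nat \<Rightarrow> 'v set \<Rightarrow> nat \<Rightarrow> 'v set set \<Rightarrow> bool" where
  "spine_plane s k W m E \<longleftrightarrow> (\<exists>P. is_PG_plane s k P \<and> E = P \<inter> spine_points s k W m
      \<and> (\<exists>L1 L2. L1 \<noteq> L2 \<and> spine_line s k W m L1 \<and> spine_line s k W m L2 \<and> L1 \<subseteq> E \<and> L2 \<subseteq> E))"

definition coplanar :: "('k::division_ring \<Rightarrow> 'v::ab_group_add \<Rightarrow> 'v) \<Rightarrow> nat \<Rightarrow> 'v set \<Rightarrow> nat \<Rightarrow> 'v set set \<Rightarrow> 'v set set \<Rightarrow> bool" where
  "coplanar s k W m L1 L2 \<longleftrightarrow> (\<exists>E. spine_plane s k W m E \<and> L1 \<subseteq> E \<and> L2 \<subseteq> E)"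

definition omega_star :: "('k::division_ring \<Rightarrow> 'v::ab_group_add \<Rightarrow> 'v) \<Rightarrow> nat \<Rightarrow> 'v set \<Rightarrow> nat \<Rightarrow> 'v set set \<Rightarrow> bool" where
  "omega_star s k W m X \<longleftrightarrow> (\<exists>H. H \<in> Sub s (k - 1) \<and> 1 \<le> m \<and> has_dim s (H \<inter> W) (m - 1)
      \<and> X = {U \<in> Sub s k. H \<subseteq> U \<and> U \<subseteq> subsum H W})"

definition alpha_star :: "('k::division_ring \<Rightarrow> 'v::ab_group_add \<Rightarrow> 'v) \<Rightarrow> nat \<Rightarrow> 'v set \<Rightarrow> nat \<Rightarrow> 'v set set \<Rightarrow> bool" where
  "alpha_star s k W m X \<longleftrightarrow> (\<exists>H. H \<in> Sub s (k - 1) \<and> has_dim s (H \<inter> W) m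
      \<and> X = {U \<in> spine_points s k W m. H \<subseteq> U})"

definition alpha_top :: "('k::division_ring \<Rightarrow> 'v::ab_group_add \<Rightarrow> 'v) \<Rightarrow> nat \<Rightarrow> 'v set \<Rightarrow> nat \<Rightarrow> 'v set set \<Rightarrow> bool" where
  "alpha_top s k W m X \<longleftrightarrow> (\<exists>B. B \<in> Sub s (k + 1) \<and> has_dim s (B \<inter> W) m
      \<and> X = {U \<in> Sub s k. B \<inter> W \<subseteq> U \<and> U \<subseteq> B})"

definition omega_top :: "('k::division_ring \<Rightarrow> 'v::ab_group_add \<Rightarrow> 'v) \<Rightarrow> nat \<Rightarrow> 'v set \<Rightarrow> nat \<Rightarrow> 'v set set \<Rightarrow> bool" where
  "omega_top s k W m X \<longleftrightarrow> (\<exists>B. B \<in> Sub s (k + 1) \<and> has_dim s (B \<inter> W) (m + 1)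
      \<and> X = {U \<in> spine_points s k W m. U \<subseteq> B})"

definition is_star where
  "is_star s k W m X \<longleftrightarrow> omega_star s k W m X \<or> alpha_star s k W m X"

definition is_top where
  "is_top s k W m X \<longleftrightarrow> alpha_top s k W m X \<or> omega_top s k W m X"

end

theory Submission
  imports Defs
begin

locale LV =
  fixes s :: "'k::division_ring \<Rightarrow> 'v::ab_group_add \<Rightarrow> 'v"
  assumes lvs: "lvs s"
begin

lemma add_dist: "s a (x + y) = s a x + s a y" using lvs unfolding lvs_def by blast
lemma add_dist2: "s (a + b) x = s a x + s b x" using lvs unfolding lvs_def by blast
lemma sassoc: "s a (s b x) = s (a * b) x" using lvs unfolding lvs_def by blast
lemma sone[simp]: "s 1 x = x" using lvs unfolding lvs_def by blast

lemma zero_v[simp]: "s a 0 = 0"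
proof -
  have "s a 0 + s a 0 = s a 0 + 0" using add_dist[of a 0 0] by simp
  thus ?thesis by simp
qed

lemma zero_s[simp]: "s 0 x = 0"
proof -
  have "s 0 x + s 0 x = s 0 x + 0" using add_dist2[of 0 0 x] by simp
  thus ?thesis by simp
qed

lemma neg_v: "s a (- x) = - s a x"
proof -
  have "s a x + s a (-x) = 0" using add_dist[of a x "-x"] by simp
  thus ?thesis by (metis add.commute add_eq_0_iff2 minus_add_cancel)
qed

lemma diff_v: "s a (x - y) = s a x - s a y"
  by (simp only: diff_conv_add_uminus add_dist neg_v)

lemma neg_s: "s (- a) x = - s a x"
proof -
  have "s a x + s (-a) x = 0" using add_dist2[of a "-a" x] by simp
  thus ?thesis by (metis add.commute add_eq_0_iff2 minus_add_cancel)
qed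

lemma subsp_neg: "subsp s U \<Longrightarrow> x \<in> U \<Longrightarrow> - x \<in> U"
  using neg_s[of 1 x] unfolding subsp_def by (metis sone)

lemma subsp_diff: "subsp s U \<Longrightarrow> x \<in> U \<Longrightarrow> y \<in> U \<Longrightarrow> x - y \<in> U"
proof -
  assume a: "subsp s U" "x \<in> U" "y \<in> U"
  have "- y \<in> U" using subsp_neg a by blast
  then have "x + - y \<in> U" using a unfolding subsp_def by blast
  then show ?thesis by (simp only: diff_conv_add_uminus)
qed

lemma subsp_Int: "subsp s U \<Longrightarrow> subsp s V \<Longrightarrow> subsp s (U \<inter> V)"
  unfolding subsp_def by blast

lemma lspan_subsp: "subsp s (lspan s A)"
  unfolding subsp_def lspan_def by blast

lemma lspan_sup: "A \<subseteq> lspan s A" by (auto simp: lspan_def)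

lemma lspan_least: "subsp s U \<Longrightarrow> A \<subseteq> U \<Longrightarrow> lspan s A \<subseteq> U" by (auto simp: lspan_def)

lemma lspan_mono: "A \<subseteq> B \<Longrightarrow> lspan s A \<subseteq> lspan s B"
  by (meson lspan_least lspan_subsp lspan_sup order_trans)

lemma lspan_eq: "subsp s U \<Longrightarrow> lspan s U = U"
  by (simp add: lspan_least lspan_sup subset_antisym)

lemma lspan_zero: "0 \<in> lspan s A"
  using lspan_subsp[of A] unfolding subsp_def by blast

lemma lspan_add: "x \<in> lspan s A \<Longrightarrow> y \<in> lspan s A \<Longrightarrow> x + y \<in> lspan s A"
  using lspan_subsp[of A] unfolding subsp_def by blast

lemma lspan_smult: "x \<in> lspan s A \<Longrightarrow> s c x \<in> lspan s A"
  using lspan_subsp[of A] unfolding subsp_def by blast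

lemma lspan_insert: "lspan s (insert a A) = {s c a + y | c y. y \<in> lspan s A}" (is "_ = ?T")
proof
  have memT: "\<And>c y. y \<in> lspan s A \<Longrightarrow> s c a + y \<in> ?T" by blast
  have "subsp s ?T"
    unfolding subsp_def
  proof (intro conjI ballI allI)
    have "s 0 a + 0 \<in> ?T" by (rule memT, rule lspan_zero)
    then show "0 \<in> ?T" by simp
  next
    fix x y assume "x \<in> ?T" "y \<in> ?T"
    then obtain c1 y1 c2 y2 where xy: "x = s c1 a + y1" "y1 \<in> lspan s A" "y = s c2 a + y2" "y2 \<in> lspan s A" by blast
    have "x + y = s (c1 + c2) a + (y1 + y2)" unfolding xy(1,3) add_dist2 by (simp only: add_ac)
    moreover have "s (c1 + c2) a + (y1 + y2) \<in> ?T" by (rule memT, rule lspan_add[OF xy(2,4)])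
    ultimately show "x + y \<in> ?T" by simp
  next
    fix e x assume "x \<in> ?T"
    then obtain c1 y1 where xy: "x = s c1 a + y1" "y1 \<in> lspan s A" by blast
    have "s e x = s (e * c1) a + s e y1" unfolding xy(1) by (simp only: add_dist sassoc)
    moreover have "s (e * c1) a + s e y1 \<in> ?T" by (rule memT, rule lspan_smult[OF xy(2)])
    ultimately show "s e x \<in> ?T" by simp
  qed
  moreover have "insert a A \<subseteq> ?T"
  proof
    fix x assume "x \<in> insert a A"
    then show "x \<in> ?T"
    proof
      assume "x = a"
      have "s 1 a + 0 \<in> ?T" by (rule memT, rule lspan_zero)
      then show ?thesis using \<open>x = a\<close> by simp
    next
      assume "x \<in> A"
      then have "s 0 a + x \<in> ?T" using lspan_sup[of A] by (intro memT) blast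
      then show ?thesis by simp
    qed
  qed
  ultimately show "lspan s (insert a A) \<subseteq> ?T" by (rule lspan_least)
next
  show "?T \<subseteq> lspan s (insert a A)"
  proof
    fix x assume "x \<in> ?T"
    then obtain c y where x: "x = s c a + y" "y \<in> lspan s A" by blast
    have "a \<in> lspan s (insert a A)" using lspan_sup[of "insert a A"] by blast
    then have "s c a \<in> lspan s (insert a A)" by (rule lspan_smult)
    moreover have "y \<in> lspan s (insert a A)" using x(2) lspan_mono[of A "insert a A"] by blast
    ultimately show "x \<in> lspan s (insert a A)" unfolding x(1) by (rule lspan_add)
  qed
qed

lemma exchange:
  assumes "v \<in> lspan s (insert a A)" "v \<notin> lspan s A"
  shows "a \<in> lspan s (insert v A)"
proof -
  obtain c y where v: "v = s c a + y" "y \<in> lspan s A" using assms(1) lspan_insert by auto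
  have c: "c \<noteq> 0" using assms(2) v by auto
  have "s (inverse c) v = a + s (inverse c) y" using c v(1) by (simp add: add_dist sassoc)
  then have a: "a = s (inverse c) v - s (inverse c) y" by (simp add: algebra_simps)
  have S: "subsp s (lspan s (insert v A))" by (rule lspan_subsp)
  have "v \<in> lspan s (insert v A)" using lspan_sup[of "insert v A"] by blast
  then have 1: "s (inverse c) v \<in> lspan s (insert v A)" using S unfolding subsp_def by blast
  have "y \<in> lspan s (insert v A)" using v(2) lspan_mono[of A "insert v A"] by blast
  then have 2: "s (inverse c) y \<in> lspan s (insert v A)" using S unfolding subsp_def by blast
  show ?thesis using a 1 2 subsp_diff[OF S] by metis
qed

lemma indep_insert:
  assumes "lin_indep s A" "u \<notin> lspan s A"
  shows "lin_indep s (insert u A)"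
  unfolding lin_indep_def
proof
  fix a assume a: "a \<in> insert u A"
  have uA: "u \<notin> A" using assms(2) lspan_sup[of A] by blast
  show "a \<notin> lspan s (insert u A - {a})"
  proof (cases "a = u")
    case True then have "insert u A - {a} = A" using uA by auto
    then show ?thesis using assms True by simp
  next
    case False
    then have aA: "a \<in> A" using a by simp
    have eq: "insert u A - {a} = insert u (A - {a})" using False by auto
    have na: "a \<notin> lspan s (A - {a})" using assms(1) aA unfolding lin_indep_def by blast
    show ?thesis
    proof
      assume "a \<in> lspan s (insert u A - {a})"
      then have "u \<in> lspan s (insert a (A - {a}))" using exchange na eq by metis
      moreover have "insert a (A - {a}) = A" using aA by auto
      ultimately show False using assms(2) by simp
    qed
  qed
qed

lemma steinitz_aux:
  "finite A \<Longrightarrow> finite B \<Longrightarrow> lin_indep s A \<Longrightarrow> A \<subseteq> lspan s B \<Longrightarrow> card (B - A) = n \<Longrightarrow> card A \<le> card B"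
proof (induction n arbitrary: B rule: less_induct)
  case (less n B)
  show ?case
  proof (cases "B \<subseteq> A")
    case True
    have "A \<subseteq> B"
    proof
      fix a assume aA: "a \<in> A"
      show "a \<in> B"
      proof (rule ccontr)
        assume "a \<notin> B"
        then have "B \<subseteq> A - {a}" using True by auto
        then have "a \<in> lspan s (A - {a})" using less.prems(4) aA lspan_mono[of B "A - {a}"] by blast
        thus False using less.prems(3) aA unfolding lin_indep_def by blast
      qed
    qed
    then show ?thesis using less.prems(2) card_mono by blast
  next
    case False
    then obtain b where b: "b \<in> B" "b \<notin> A" by auto
    have fBA: "finite (B - A)" using less.prems(2) by simp
    show ?thesis
    proof (cases "A \<subseteq> lspan s (B - {b})")
      case True
      have "(B - {b}) - A = (B - A) - {b}" by auto
      then have "card ((B - {b}) - A) < n" using card_Diff1_less[OF fBA, of b] b less.prems(5) by simp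
      then have "card A \<le> card (B - {b})" using less.IH[OF _ less.prems(1) _ less.prems(3) True refl] less.prems(2) by blast
      also have "\<dots> \<le> card B" using less.prems(2) by (simp add: card_mono)
      finally show ?thesis .
    next
      case False
      then obtain a where a: "a \<in> A" "a \<notin> lspan s (B - {b})" by auto
      have ib: "insert b (B - {b}) = B" using b by auto
      have "a \<in> lspan s B" using less.prems(4) a(1) by blast
      then have "a \<in> lspan s (insert b (B - {b}))" by (simp only: ib)
      from exchange[OF this a(2)] have ba: "b \<in> lspan s (insert a (B - {b}))" .
      define B' where "B' = insert a (B - {b})"
      have aB: "a \<notin> B - {b}" using a(2) lspan_sup[of "B - {b}"] by blast
      have fB': "finite B'" using less.prems(2) B'_def by simp
      have c1: "card B' = Suc (card (B - {b}))" unfolding B'_def using aB less.prems(2)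
        by (simp add: card_insert_disjoint)
      have c2: "card (B - {b}) = card B - 1" using b(1) by (simp add: card_Diff_singleton)
      have c3: "card B > 0" using b(1) less.prems(2) card_gt_0_iff by blast
      have cardB': "card B' = card B" using c1 c2 c3 by simp
      have "B \<subseteq> lspan s B'"
      proof
        fix x assume "x \<in> B"
        show "x \<in> lspan s B'"
        proof (cases "x = b")
          case True then show ?thesis using ba unfolding B'_def by simp
        next
          case False then have "x \<in> B'" using \<open>x \<in> B\<close> unfolding B'_def by simp
          then show ?thesis using lspan_sup[of B'] by blast
        qed
      qed
      then have "lspan s B \<subseteq> lspan s B'" using lspan_least[OF lspan_subsp[of B']] by blast
      then have AB': "A \<subseteq> lspan s B'" using less.prems(4) by blast
      have "B' - A = (B - A) - {b}" unfolding B'_def using a(1) b by auto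
      then have "card (B' - A) < n" using card_Diff1_less[OF fBA, of b] b less.prems(5) by simp
      then have "card A \<le> card B'" using less.IH[OF _ less.prems(1) fB' less.prems(3) AB' refl] by blast
      then show ?thesis using cardB' by simp
    qed
  qed
qed

lemma steinitz: "finite A \<Longrightarrow> finite B \<Longrightarrow> lin_indep s A \<Longrightarrow> A \<subseteq> lspan s B \<Longrightarrow> card A \<le> card B"
  using steinitz_aux by blast

lemma dim_unique: "has_dim s U a \<Longrightarrow> has_dim s U b \<Longrightarrow> a = b"
  unfolding has_dim_def by (metis le_antisym steinitz)

lemma has_dim_subsp: "has_dim s U d \<Longrightarrow> subsp s U" unfolding has_dim_def by blast

lemma dim_eq_subset:
  assumes V: "has_dim s V d" and U: "has_dim s U d" and sub: "V \<subseteq> U"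
  shows "V = U"
proof (rule ccontr)
  assume ne: "V \<noteq> U"
  obtain D where D: "finite D" "card D = d" "lin_indep s D" "D \<subseteq> V" "lspan s D = V"
    using V unfolding has_dim_def by blast
  obtain E where E: "finite E" "card E = d" "lspan s E = U"
    using U unfolding has_dim_def by blast
  obtain u where u: "u \<in> U" "u \<notin> V" using ne sub by blast
  have "lin_indep s (insert u D)" using indep_insert D u by simp
  moreover have "insert u D \<subseteq> lspan s E" using E u D sub by blast
  moreover have "finite (insert u D)" using D by simp
  ultimately have "card (insert u D) \<le> card E" using steinitz E(1) by blast
  moreover have "u \<notin> D" using D(4) u by blast
  then have "card (insert u D) = Suc d" using D by simp
  ultimately show False using E by simp
qed

lemma dim_insert:
  assumes V: "has_dim s V d" and z: "z \<notin> V"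
  shows "has_dim s (lspan s (insert z V)) (Suc d)"
proof -
  obtain D where D: "finite D" "card D = d" "lin_indep s D" "D \<subseteq> V" "lspan s D = V"
    using V unfolding has_dim_def by blast
  have eq: "lspan s (insert z D) = lspan s (insert z V)"
  proof
    show "lspan s (insert z D) \<subseteq> lspan s (insert z V)" using D(4) lspan_mono[of "insert z D" "insert z V"] by blast
    have "V \<subseteq> lspan s (insert z D)" using D(5) lspan_mono[of D "insert z D"] by blast
    then have "insert z V \<subseteq> lspan s (insert z D)" using lspan_sup[of "insert z D"] by blast
    then show "lspan s (insert z V) \<subseteq> lspan s (insert z D)" using lspan_least[OF lspan_subsp[of "insert z D"]] by blast
  qed
  show ?thesis unfolding has_dim_def
  proof (intro conjI exI[of _ "insert z D"])
    show "subsp s (lspan s (insert z V))" by (rule lspan_subsp)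
    show "finite (insert z D)" using D by simp
    have "z \<notin> D" using D(4) z by blast
    then show "card (insert z D) = Suc d" using D by simp
    show "lin_indep s (insert z D)" using indep_insert D z by simp
    show "insert z D \<subseteq> lspan s (insert z V)" using eq lspan_sup[of "insert z D"] by blast
    show "lspan s (insert z D) = lspan s (insert z V)" by (rule eq)
  qed
qed

lemma sub_dim:
  assumes U: "subsp s U" and UV: "U \<subseteq> V" and V: "has_dim s V n"
  shows "\<exists>d. has_dim s U d"
proof -
  obtain E where E: "finite E" "lspan s E = V" "card E = n" using V unfolding has_dim_def by blast
  let ?C = "{card A | A. finite A \<and> A \<subseteq> U \<and> lin_indep s A}"
  have bound: "\<forall>c\<in>?C. c \<le> n" using steinitz E UV by fastforce
  have "0 \<in> ?C" by (rule CollectI, rule exI[of _ "{}"]) (auto simp: lin_indep_def)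
  have fin: "finite ?C" using bound finite_subset[of ?C "{..n}"] by auto
  have "Max ?C \<in> ?C" using fin \<open>0 \<in> ?C\<close> Max_in by blast
  then obtain A where A: "finite A" "A \<subseteq> U" "lin_indep s A" "card A = Max ?C" by auto
  have "lspan s A = U"
  proof
    show "lspan s A \<subseteq> U" using lspan_least[OF U] A by blast
    show "U \<subseteq> lspan s A"
    proof
      fix u assume u: "u \<in> U"
      show "u \<in> lspan s A"
      proof (rule ccontr)
        assume nu: "u \<notin> lspan s A"
        then have "lin_indep s (insert u A)" using indep_insert A by blast
        moreover have "insert u A \<subseteq> U" "finite (insert u A)" using A u by auto
        ultimately have "card (insert u A) \<in> ?C" by blast
        then have "card (insert u A) \<le> Max ?C" using fin by simp
        moreover have "u \<notin> A" using nu lspan_sup[of A] by blast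
        ultimately show False using A by simp
      qed
    qed
  qed
  then have "has_dim s U (card A)" using A U unfolding has_dim_def by blast
  then show ?thesis by blast
qed

lemma ext_inter:
  assumes X: "subsp s X" and W: "subsp s W" and z: "z \<in> W"
  shows "lspan s (insert z X) \<inter> W = lspan s (insert z (X \<inter> W))"
proof
  have S: "subsp s (lspan s (insert z X) \<inter> W)" using subsp_Int lspan_subsp W by blast
  have "insert z (X \<inter> W) \<subseteq> lspan s (insert z X) \<inter> W" using lspan_sup[of "insert z X"] z by blast
  then show "lspan s (insert z (X \<inter> W)) \<subseteq> lspan s (insert z X) \<inter> W" using lspan_least[OF S] by blast
next
  show "lspan s (insert z X) \<inter> W \<subseteq> lspan s (insert z (X \<inter> W))"
  proof
    fix y assume y: "y \<in> lspan s (insert z X) \<inter> W"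
    then obtain c h where ch: "y = s c z + h" "h \<in> lspan s X" using lspan_insert by auto
    have hX: "h \<in> X" using ch(2) lspan_eq X by blast
    have "s c z \<in> W" using W z unfolding subsp_def by blast
    then have "h \<in> W" using subsp_diff[OF W, of y "s c z"] y ch(1) by (simp add: algebra_simps)
    then have "h \<in> lspan s (X \<inter> W)" using hX lspan_sup[of "X \<inter> W"] by blast
    then show "y \<in> lspan s (insert z (X \<inter> W))" using ch(1) lspan_insert by blast
  qed
qed

lemma span_hyper:
  assumes "has_dim s V d" "has_dim s U (Suc d)" "V \<subseteq> U" "z \<in> U" "z \<notin> V"
  shows "lspan s (insert z V) = U"
proof -
  have "has_dim s (lspan s (insert z V)) (Suc d)" using dim_insert assms by blast
  moreover have "lspan s (insert z V) \<subseteq> U"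
    using lspan_least[OF has_dim_subsp[OF assms(2)]] assms(3,4) by blast
  ultimately show ?thesis using dim_eq_subset assms(2) by blast
qed

lemma subsum_subsp:
  assumes "subsp s H" "subsp s W"
  shows "subsp s (subsum H W)" "H \<subseteq> subsum H W" "W \<subseteq> subsum H W"
proof -
  show "subsp s (subsum H W)" unfolding subsp_def subsum_def
  proof (intro conjI ballI allI)
    show "0 \<in> {x + y |x y. x \<in> H \<and> y \<in> W}" using assms unfolding subsp_def by force
  next
    fix x y assume "x \<in> {x + y |x y. x \<in> H \<and> y \<in> W}" "y \<in> {x + y |x y. x \<in> H \<and> y \<in> W}"
    then obtain a b c d where "x = a + b" "y = c + d" "a \<in> H" "b \<in> W" "c \<in> H" "d \<in> W" by blast
    moreover have "x + y = (a + c) + (b + d)" using calculation by (simp add: add_ac)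
    ultimately show "x + y \<in> {x + y |x y. x \<in> H \<and> y \<in> W}" using assms unfolding subsp_def by blast
  next
    fix e x assume "x \<in> {x + y |x y. x \<in> H \<and> y \<in> W}"
    then obtain a b where "x = a + b" "a \<in> H" "b \<in> W" by blast
    moreover have "s e x = s e a + s e b" using calculation by (simp add: add_dist)
    ultimately show "s e x \<in> {x + y |x y. x \<in> H \<and> y \<in> W}" using assms unfolding subsp_def by blast
  qed
  show "H \<subseteq> subsum H W" unfolding subsum_def using assms unfolding subsp_def by force
  show "W \<subseteq> subsum H W" unfolding subsum_def using assms unfolding subsp_def by force
qed


lemma Sub_dim: "U \<in> Sub s d \<longleftrightarrow> has_dim s U d" by (simp add: Sub_def)

lemma sameH:
  assumes x: "x \<in> Sub s k" and y: "y \<in> Sub s k" and xy: "x \<noteq> y" and H: "H \<in> Sub s (k-1)"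
    and Hx: "H \<subseteq> x" and Hy: "H \<subseteq> y" and k: "0 < k"
  shows "H = x \<inter> y"
proof (rule ccontr)
  assume "H \<noteq> x \<inter> y"
  then obtain z where z: "z \<in> x" "z \<in> y" "z \<notin> H" using Hx Hy by blast
  have hd: "has_dim s H (k-1)" using H by (simp add: Sub_def)
  have xd: "has_dim s x (Suc (k-1))" using x k by (simp add: Sub_def)
  have yd: "has_dim s y (Suc (k-1))" using y k by (simp add: Sub_def)
  have "lspan s (insert z H) = x" using span_hyper[OF hd xd Hx z(1) z(3)] .
  moreover have "lspan s (insert z H) = y" using span_hyper[OF hd yd Hy z(2) z(3)] .
  ultimately show False using xy by simp
qed

lemma sameB:
  assumes x: "x \<in> Sub s k" and y: "y \<in> Sub s k" and xy: "x \<noteq> y" and B: "B \<in> Sub s (k+1)"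
    and xB: "x \<subseteq> B" and yB: "y \<subseteq> B"
  shows "B = lspan s (x \<union> y)"
proof -
  have xd: "has_dim s x k" using x by (simp add: Sub_def)
  have yd: "has_dim s y k" using y by (simp add: Sub_def)
  have Bd: "has_dim s B (Suc k)" using B by (simp add: Sub_def)
  have "\<not> y \<subseteq> x" using dim_eq_subset[OF yd xd] xy by blast
  then obtain z where z: "z \<in> y" "z \<notin> x" by blast
  have 1: "lspan s (insert z x) = B" using span_hyper[OF xd Bd xB _ z(2)] z(1) yB by blast
  have 2: "lspan s (insert z x) \<subseteq> lspan s (x \<union> y)" using z(1) lspan_mono[of "insert z x" "x \<union> y"] by blast
  have 3: "lspan s (x \<union> y) \<subseteq> B" using lspan_least[OF has_dim_subsp[OF Bd]] xB yB by blast
  show ?thesis using 1 2 3 by blast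
qed

lemma pair:
  assumes k: "1 < k"
  and L1: "L1 = pencil s k H1 B1 \<inter> spine_points s k W m" "H1 \<in> Sub s (k-1)" "B1 \<in> Sub s (k+1)" "x1 \<noteq> y1" "x1 \<in> L1" "y1 \<in> L1"
  and L2: "L2 = pencil s k H2 B2 \<inter> spine_points s k W m" "H2 \<in> Sub s (k-1)" "B2 \<in> Sub s (k+1)" "x2 \<noteq> y2" "x2 \<in> L2" "y2 \<in> L2"
  and cp: "coplanar s k W m L1 L2"
  shows "H1 = H2 \<or> B1 = B2"
proof -
  obtain E where E: "spine_plane s k W m E" "L1 \<subseteq> E" "L2 \<subseteq> E" using cp unfolding coplanar_def by blast
  obtain P where P: "is_PG_plane s k P" "E = P \<inter> spine_points s k W m" using E(1) unfolding spine_plane_def by blast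
  obtain Y Z where YZ: "(Y \<in> Sub s (k-2) \<and> Z \<in> Sub s (k+1)) \<or> (Y \<in> Sub s (k-1) \<and> Z \<in> Sub s (k+2))"
     and Pd: "P = {U \<in> Sub s k. Y \<subseteq> U \<and> U \<subseteq> Z}" using P(1) unfolding is_PG_plane_def by blast
  have inP: "\<And>u. u \<in> L1 \<union> L2 \<Longrightarrow> Y \<subseteq> u \<and> u \<subseteq> Z" using E P Pd by blast
  have p1: "x1 \<in> Sub s k" "y1 \<in> Sub s k" "H1 \<subseteq> x1" "H1 \<subseteq> y1" "x1 \<subseteq> B1" "y1 \<subseteq> B1"
    using L1 unfolding pencil_def by auto
  have p2: "x2 \<in> Sub s k" "y2 \<in> Sub s k" "H2 \<subseteq> x2" "H2 \<subseteq> y2" "x2 \<subseteq> B2" "y2 \<subseteq> B2"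
    using L2 unfolding pencil_def by auto
  have k0: "0 < k" using k by simp
  from YZ show ?thesis
  proof
    assume a: "Y \<in> Sub s (k-2) \<and> Z \<in> Sub s (k+1)"
    have "B1 = lspan s (x1 \<union> y1)" by (rule sameB[OF p1(1,2) L1(4) L1(3) p1(5,6)])
    moreover have "Z = lspan s (x1 \<union> y1)" by (rule sameB[OF p1(1,2) L1(4)]) (use a inP L1 in auto)
    moreover have "B2 = lspan s (x2 \<union> y2)" by (rule sameB[OF p2(1,2) L2(4) L2(3) p2(5,6)])
    moreover have "Z = lspan s (x2 \<union> y2)" by (rule sameB[OF p2(1,2) L2(4)]) (use a inP L2 in auto)
    ultimately show ?thesis by simp
  next
    assume a: "Y \<in> Sub s (k-1) \<and> Z \<in> Sub s (k+2)"
    have "H1 = x1 \<inter> y1" by (rule sameH[OF p1(1,2) L1(4) L1(2) p1(3,4) k0])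
    moreover have "Y = x1 \<inter> y1" by (rule sameH[OF p1(1,2) L1(4)]) (use a inP L1 k0 in auto)
    moreover have "H2 = x2 \<inter> y2" by (rule sameH[OF p2(1,2) L2(4) L2(2) p2(3,4) k0])
    moreover have "Y = x2 \<inter> y2" by (rule sameH[OF p2(1,2) L2(4)]) (use a inP L2 k0 in auto)
    ultimately show ?thesis by simp
  qed
qed

lemma star_case:
  assumes H: "H \<in> Sub s (k-1)" and k: "0 < k" and W: "subsp s W"
  and Q: "Q \<subseteq> {U \<in> spine_points s k W m. H \<subseteq> U}" and x: "x \<in> Q"
  shows "\<exists>X. is_star s k W m X \<and> Q \<subseteq> X"
proof (cases "has_dim s (H \<inter> W) m")
  case True
  then have "alpha_star s k W m {U \<in> spine_points s k W m. H \<subseteq> U}" using H unfolding alpha_star_def by blast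
  then show ?thesis using Q unfolding is_star_def by blast
next
  case False
  have Hd: "has_dim s H (k-1)" using H by (simp add: Sub_def)
  have sH: "subsp s H" using has_dim_subsp[OF Hd] .
  obtain d where d: "has_dim s (H \<inter> W) d" using sub_dim[OF subsp_Int[OF sH W] _ Hd] by blast
  have key: "\<exists>z. z \<in> U \<and> z \<in> W \<and> z \<notin> H" if "has_dim s (U \<inter> W) m" "H \<subseteq> U" for U
  proof (rule ccontr)
    assume "\<not> ?thesis"
    then have "U \<inter> W = H \<inter> W" using that(2) by blast
    then show False using that(1) False by simp
  qed
  have span: "lspan s (insert z H) = U" if "U \<in> Sub s k" "H \<subseteq> U" "z \<in> U" "z \<notin> H" for U z
  proof -
    have "has_dim s U (Suc (k-1))" using that(1) k by (simp add: Sub_def)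
    then show ?thesis using span_hyper[OF Hd _ that(2-4)] by blast
  qed
  have xS: "x \<in> Sub s k" "has_dim s (x \<inter> W) m" "H \<subseteq> x" using Q x unfolding spine_points_def by auto
  obtain z where z: "z \<in> x" "z \<in> W" "z \<notin> H" using key[OF xS(2,3)] by blast
  have "x \<inter> W = lspan s (insert z (H \<inter> W))"
    using span[OF xS(1,3) z(1,3)] ext_inter[OF sH W z(2)] by simp
  moreover have "has_dim s (lspan s (insert z (H \<inter> W))) (Suc d)" using dim_insert[OF d] z(3) by blast
  ultimately have "m = Suc d" using xS(2) dim_unique by metis
  then have m: "1 \<le> m" "has_dim s (H \<inter> W) (m - 1)" using d by auto
  define X where "X = {U \<in> Sub s k. H \<subseteq> U \<and> U \<subseteq> subsum H W}"
  have "omega_star s k W m X" unfolding omega_star_def X_def using H m by blast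
  moreover have "Q \<subseteq> X"
  proof
    fix U assume U: "U \<in> Q"
    have US: "U \<in> Sub s k" "has_dim s (U \<inter> W) m" "H \<subseteq> U" using Q U unfolding spine_points_def by auto
    obtain z' where z': "z' \<in> U" "z' \<in> W" "z' \<notin> H" using key[OF US(2,3)] by blast
    have "insert z' H \<subseteq> subsum H W" using subsum_subsp(2,3)[OF sH W] z'(2) by blast
    then have "lspan s (insert z' H) \<subseteq> subsum H W" by (rule lspan_least[OF subsum_subsp(1)[OF sH W]])
    then have "U \<subseteq> subsum H W" using span[OF US(1,3) z'(1,3)] by simp
    then show "U \<in> X" using US unfolding X_def by blast
  qed
  ultimately show ?thesis unfolding is_star_def by blast
qed

lemma top_case:
  assumes B: "B \<in> Sub s (k+1)" and W: "subsp s W"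
  and Q: "Q \<subseteq> {U \<in> spine_points s k W m. U \<subseteq> B}" and x: "x \<in> Q"
  shows "\<exists>X. is_top s k W m X \<and> Q \<subseteq> X"
proof (cases "has_dim s (B \<inter> W) (m+1)")
  case True
  then have "omega_top s k W m {U \<in> spine_points s k W m. U \<subseteq> B}" using B unfolding omega_top_def by blast
  then show ?thesis using Q unfolding is_top_def by blast
next
  case False
  have Bd: "has_dim s B (Suc k)" using B by (simp add: Sub_def)
  have sB: "subsp s B" using has_dim_subsp[OF Bd] .
  have xS: "x \<in> Sub s k" "has_dim s (x \<inter> W) m" "x \<subseteq> B" using Q x unfolding spine_points_def by auto
  have xd: "has_dim s x k" using xS(1) by (simp add: Sub_def)
  have sx: "subsp s x" using has_dim_subsp[OF xd] .
  have "B \<inter> W \<subseteq> x"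
  proof (rule ccontr)
    assume "\<not> B \<inter> W \<subseteq> x"
    then obtain z where z: "z \<in> B" "z \<in> W" "z \<notin> x" by blast
    have "lspan s (insert z x) = B" using span_hyper[OF xd Bd xS(3) z(1,3)] .
    then have "B \<inter> W = lspan s (insert z (x \<inter> W))" using ext_inter[OF sx W z(2)] by simp
    moreover have "has_dim s (lspan s (insert z (x \<inter> W))) (Suc m)" using dim_insert[OF xS(2)] z(3) by blast
    ultimately show False using False by simp
  qed
  then have BW: "B \<inter> W = x \<inter> W" using xS(3) by blast
  define X where "X = {U \<in> Sub s k. B \<inter> W \<subseteq> U \<and> U \<subseteq> B}"
  have "has_dim s (B \<inter> W) m" using BW xS(2) by simp
  then have "alpha_top s k W m X" unfolding alpha_top_def X_def using B by blast
  moreover have "Q \<subseteq> X"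
  proof
    fix U assume U: "U \<in> Q"
    have US: "U \<in> Sub s k" "has_dim s (U \<inter> W) m" "U \<subseteq> B" using Q U unfolding spine_points_def by auto
    have "U \<inter> W = B \<inter> W" using dim_eq_subset[OF US(2)] BW xS(2) US(3) by (metis Int_mono order_refl)
    then show "U \<in> X" using US unfolding X_def by blast
  qed
  ultimately show ?thesis unfolding is_top_def by blast
qed

lemma line_wit:
  assumes "spine_line s k W m L"
  shows "\<exists>H B x y. L = pencil s k H B \<inter> spine_points s k W m \<and> H \<in> Sub s (k-1) \<and> B \<in> Sub s (k+1)
     \<and> x \<noteq> y \<and> x \<in> L \<and> y \<in> L"
proof -
  from assms obtain l where l: "is_pencil s k l" "L = l \<inter> spine_points s k W m"
     "\<exists>x y. x \<noteq> y \<and> x \<in> L \<and> y \<in> L" unfolding spine_line_def by blast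
  from l(1) obtain H B where HB: "H \<in> Sub s (k - 1)" "B \<in> Sub s (k + 1)" "l = pencil s k H B"
    unfolding is_pencil_def by blast
  from l(3) obtain x y where xy: "x \<noteq> y" "x \<in> L" "y \<in> L" by blast
  have Le: "L = pencil s k H B \<inter> spine_points s k W m" using HB(3) l(2) by simp
  show ?thesis
    by (rule exI[of _ H], rule exI[of _ B], rule exI[of _ x], rule exI[of _ y])
       (intro conjI Le HB(1) HB(2) xy)
qed

end

theorem lemma1p2:
  fixes s :: "'k::division_ring \<Rightarrow> 'v::ab_group_add \<Rightarrow> 'v"
    and W :: "'v set" and n k w m :: nat and L1 L2 L3 :: "'v set set"
  assumes "lvs s" and "has_dim s UNIV n" and "3 \<le> n"
    and "1 < k" and "k < n - 1"
    and "has_dim s W w"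
    and "int k - (int n - int w) \<le> int m" and "m \<le> min k w"
    and "spine_line s k W m L1" and "spine_line s k W m L2" and "spine_line s k W m L3"
    and "coplanar s k W m L1 L2" and "coplanar s k W m L1 L3" and "coplanar s k W m L2 L3"
    and "\<exists>U. U \<in> line_closure s k L1 \<and> U \<in> line_closure s k L2 \<and> U \<in> line_closure s k L3"
    and "\<not> (\<exists>E. spine_plane s k W m E \<and> L1 \<subseteq> E \<and> L2 \<subseteq> E \<and> L3 \<subseteq> E)"
  shows "(\<exists>X. is_star s k W m X \<and> L1 \<subseteq> X \<and> L2 \<subseteq> X \<and> L3 \<subseteq> X)
       \<or> (\<exists>X. is_top s k W m X \<and> L1 \<subseteq> X \<and> L2 \<subseteq> X \<and> L3 \<subseteq> X)"
proof -
  interpret LV s by (rule LV.intro) (rule assms(1))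
  have k0: "0 < k" using assms(4) by simp
  have Ws: "subsp s W" using has_dim_subsp[OF assms(6)] .
  obtain H1 B1 x1 y1 where w1: "L1 = pencil s k H1 B1 \<inter> spine_points s k W m" "H1 \<in> Sub s (k-1)"
      "B1 \<in> Sub s (k+1)" "x1 \<noteq> y1" "x1 \<in> L1" "y1 \<in> L1"
    using line_wit[OF assms(9)] by blast
  obtain H2 B2 x2 y2 where w2: "L2 = pencil s k H2 B2 \<inter> spine_points s k W m" "H2 \<in> Sub s (k-1)"
      "B2 \<in> Sub s (k+1)" "x2 \<noteq> y2" "x2 \<in> L2" "y2 \<in> L2"
    using line_wit[OF assms(10)] by blast
  obtain H3 B3 x3 y3 where w3: "L3 = pencil s k H3 B3 \<inter> spine_points s k W m" "H3 \<in> Sub s (k-1)"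
      "B3 \<in> Sub s (k+1)" "x3 \<noteq> y3" "x3 \<in> L3" "y3 \<in> L3"
    using line_wit[OF assms(11)] by blast
  have c12: "H1 = H2 \<or> B1 = B2" by (rule pair[OF assms(4) w1 w2 assms(12)])
  have c13: "H1 = H3 \<or> B1 = B3" by (rule pair[OF assms(4) w1 w3 assms(13)])
  have c23: "H2 = H3 \<or> B2 = B3" by (rule pair[OF assms(4) w2 w3 assms(14)])
  have xQ: "x1 \<in> L1 \<union> L2 \<union> L3" using w1 by simp
  have "(H1 = H2 \<and> H1 = H3) \<or> (B1 = B2 \<and> B1 = B3)" using c12 c13 c23 by blast
  then show ?thesis
  proof
    assume h: "H1 = H2 \<and> H1 = H3"
    have "L1 \<union> L2 \<union> L3 \<subseteq> {U \<in> spine_points s k W m. H1 \<subseteq> U}"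
      using w1(1) w2(1) w3(1) h unfolding pencil_def by auto
    from star_case[OF w1(2) k0 Ws this xQ] obtain X where "is_star s k W m X" "L1 \<union> L2 \<union> L3 \<subseteq> X" by blast
    then show ?thesis by blast
  next
    assume h: "B1 = B2 \<and> B1 = B3"
    have "L1 \<union> L2 \<union> L3 \<subseteq> {U \<in> spine_points s k W m. U \<subseteq> B1}"
      using w1(1) w2(1) w3(1) h unfolding pencil_def by auto
    from top_case[OF w1(3) Ws this xQ] obtain X where "is_top s k W m X" "L1 \<union> L2 \<union> L3 \<subseteq> X" by blast
    then show ?thesis by blast
  qed
qed

end
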